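(* Let $n$ be such that $n/2$ is odd, let $\Omega\subseteq\mathbb{R}^n$ be open, let $\lambda\in\mathbb{C}\setminus\{0\}$, and let $\underline{f}$ be a vector-valued function on $\Omega$; set $u=\partial_{\underline{x}}\underline{f}-\underline{f}^2$. Then any scalar-valued solution $\phi$ of the equation $(-\Delta_n+u)\phi=\lambda^2\phi$ (meaning $-\Delta_n\phi+\phi\,u=\lambda^2\phi$) can be uniquely represented as $\phi=g+h$, where $g$ and $h$ are $\mathbb{C}_n$-valued solutions of \[\left(\partial_{\underline{x}}+M^{\underline{f}-\lambda ie_N}\right)g=0\quad\text{and}\quad\left(\partial_{\underline{x}}+M^{\underline{f}+\lambda ie_N}\right)h=0\] respectively.
   Context: $\mathbb{R}_{0,n}$ is the real Clifford algebra generated by an orthonormal basis $e_1,\dots,e_n$ of $\mathbb{R}^n$ with relations $e_je_k+e_ke_j=-2\delta_{jk}$; $\mathbb{C}_n=\mathbb{R}_{0,n}\otimes\mathbb{C}$, with $i$ the complex unit. $e_N=e_1e_2\cdots e_n$ is the pseudo-scalar. The Dirac operator is $\partial_{\underline{x}}=\sum_{j=1}^n e_j\partial_{x_j}$, acting from the left; $\Delta_n=-\partial_{\underline{x}}^2$ is the Laplacian. For a function $F$, $M^F$ is right multiplication: $M^Fg=gF$. *)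

theory Defs
  imports "HOL-Analysis.Analysis" "HOL-Library.Function_Algebras"
begin

text \<open>The complex Clifford algebra C_n = R_{0,n} (x) C, with the generators indexed by a
finite linearly ordered type 'n (so n = CARD('n), and e_1,...,e_n are listed in the order
of 'n).  An element is given by its coefficients w.r.t. the blade basis e_A, A a subset of
the index set; e_A = e_{a_1} ... e_{a_k} for a_1 < ... < a_k.  Addition, subtraction and
zero are pointwise (Function_Algebras); the Clifford product is cl_mult.\<close>

type_synonym 'n cl = "'n set \<Rightarrow> complex"

text \<open>Sign in e_A e_B = sign(A,B) e_{A symdiff B}, using e_j e_k = - e_k e_j (j ~= k) and e_j^2 = -1.\<close>
definition cl_sign :: "'n::{finite,linorder} set \<Rightarrow> 'n set \<Rightarrow> complex" where
  "cl_sign A B = (-1) ^ (card {(a, b). a \<in> A \<and> b \<in> B \<and> b < a} + card (A \<inter> B))"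

definition cl_mult :: "'n::{finite,linorder} cl \<Rightarrow> 'n cl \<Rightarrow> 'n cl" where
  "cl_mult a b = (\<lambda>C. \<Sum>A\<in>UNIV. \<Sum>B\<in>UNIV.
      if (A - B) \<union> (B - A) = C then cl_sign A B * a A * b B else 0)"

definition cl_blade :: "complex \<Rightarrow> 'n set \<Rightarrow> 'n cl" where
  "cl_blade c A0 = (\<lambda>A. if A = A0 then c else 0)"

definition cl_scalar :: "complex \<Rightarrow> 'n cl" where
  "cl_scalar c = cl_blade c {}"

definition cl_e :: "'n \<Rightarrow> 'n cl" where
  "cl_e j = cl_blade 1 {j}"

definition cl_eN :: "'n cl" where
  "cl_eN = cl_blade 1 UNIV"

definition cl_vec :: "(real, 'n::finite) vec \<Rightarrow> 'n cl" where
  "cl_vec v = (\<lambda>A. \<Sum>j\<in>UNIV. if A = {j} then complex_of_real (v $ j) else 0)"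

definition pd :: "'n \<Rightarrow> (real ^ 'n::finite \<Rightarrow> complex) \<Rightarrow> real ^ 'n \<Rightarrow> complex" where
  "pd j F x = frechet_derivative F (at x) (axis j 1)"

definition C1_on :: "(real ^ 'n::finite) set \<Rightarrow> (real ^ 'n \<Rightarrow> complex) \<Rightarrow> bool" where
  "C1_on \<Omega> F \<longleftrightarrow> (\<forall>x\<in>\<Omega>. F differentiable (at x)) \<and> (\<forall>j. continuous_on \<Omega> (pd j F))"

definition C2_on :: "(real ^ 'n::finite) set \<Rightarrow> (real ^ 'n \<Rightarrow> complex) \<Rightarrow> bool" where
  "C2_on \<Omega> F \<longleftrightarrow> C1_on \<Omega> F \<and> (\<forall>j. C1_on \<Omega> (pd j F))"

definition cl_C1_on :: "(real ^ 'n::finite) set \<Rightarrow> (real ^ 'n \<Rightarrow> 'n cl) \<Rightarrow> bool" where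
  "cl_C1_on \<Omega> G \<longleftrightarrow> (\<forall>A. C1_on \<Omega> (\<lambda>x. G x A))"

definition dirac :: "((real, 'n::{finite,linorder}) vec \<Rightarrow> 'n cl) \<Rightarrow> (real, 'n) vec \<Rightarrow> 'n cl" where
  "dirac G x = (\<Sum>j\<in>UNIV. cl_mult (cl_e j) (\<lambda>A. pd j (\<lambda>y. G y A) x))"

definition laplacian :: "(real ^ 'n::finite \<Rightarrow> complex) \<Rightarrow> real ^ 'n \<Rightarrow> complex" where
  "laplacian F x = (\<Sum>j\<in>UNIV. pd j (pd j F) x)"

end

theory Submission
  imports Defs
begin


definition sd :: "'a set \<Rightarrow> 'a set \<Rightarrow> 'a set" where "sd A B = (A - B) \<union> (B - A)"

lemma sd_eq_iff: "sd A B = D \<longleftrightarrow> B = sd A D"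
  unfolding sd_def by blast

lemma sd_sd[simp]: "sd A (sd A B) = B" unfolding sd_def by blast
lemma sd_assoc: "sd (sd A B) C = sd A (sd B C)" unfolding sd_def by blast
lemma sd_comm: "sd A B = sd B A" unfolding sd_def by blast
lemma sd_empty[simp]: "sd {} A = A" "sd A {} = A" "sd A A = {}" unfolding sd_def by auto

lemma cl_mult_alt:
  fixes a b :: "'n::{finite,linorder} cl"
  shows "cl_mult a b D = (\<Sum>A\<in>UNIV. cl_sign A (sd A D) * a A * b (sd A D))"
proof -
  have "cl_mult a b D = (\<Sum>A\<in>UNIV. \<Sum>B\<in>UNIV. if B = sd A D then cl_sign A B * a A * b B else 0)"
    unfolding cl_mult_def by (intro sum.cong refl) (metis sd_def sd_eq_iff)
  also have "\<dots> = (\<Sum>A\<in>UNIV. cl_sign A (sd A D) * a A * b (sd A D))"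
    by (intro sum.cong refl) (simp add: sum.delta')
  finally show ?thesis .
qed

lemma neg1_pow_card_sd:
  assumes "finite X" "finite Y"
  shows "(-1::complex) ^ card (sd X Y) = (-1) ^ card X * (-1) ^ card Y"
proof -
  have c1: "card (sd X Y) = card (X - Y) + card (Y - X)"
    unfolding sd_def using assms by (intro card_Un_disjoint) auto
  have c2: "card X = card (X - Y) + card (X \<inter> Y)"
  proof -
    have "X = (X - Y) \<union> (X \<inter> Y)" by blast
    then have "card X = card ((X - Y) \<union> (X \<inter> Y))" by simp
    also have "\<dots> = card (X - Y) + card (X \<inter> Y)" using assms by (intro card_Un_disjoint) auto
    finally show ?thesis .
  qed
  have c3: "card Y = card (Y - X) + card (X \<inter> Y)"
  proof -
    have "Y = (Y - X) \<union> (X \<inter> Y)" by blast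
    then have "card Y = card ((Y - X) \<union> (X \<inter> Y))" by simp
    also have "\<dots> = card (Y - X) + card (X \<inter> Y)" using assms by (intro card_Un_disjoint) auto
    finally show ?thesis .
  qed
  have "(-1::complex) ^ card X * (-1) ^ card Y
      = (-1) ^ card (sd X Y) * ((-1) ^ card (X \<inter> Y))^2"
    by (simp add: c1 c2 c3 power_add power2_eq_square algebra_simps)
  also have "((-1::complex) ^ card (X \<inter> Y))^2 = 1"
    by (simp add: power_even_eq[symmetric] power_mult[symmetric] mult.commute)
  finally show ?thesis by simp
qed

definition invp :: "'n::linorder set \<Rightarrow> 'n set \<Rightarrow> ('n \<times> 'n) set" where
  "invp A B = {(a, b). a \<in> A \<and> b \<in> B \<and> b < a}"

lemma cl_sign_alt: "cl_sign A B = (-1) ^ card (invp A B) * (-1) ^ card (A \<inter> B)"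
  unfolding cl_sign_def invp_def by (simp add: power_add)

lemma invp_sd1: "invp (sd A B) C = sd (invp A C) (invp B C)"
  unfolding invp_def sd_def by auto
lemma invp_sd2: "invp A (sd B C) = sd (invp A B) (invp A C)"
  unfolding invp_def sd_def by auto
lemma int_sd1: "sd A B \<inter> C = sd (A \<inter> C) (B \<inter> C)" unfolding sd_def by auto
lemma int_sd2: "A \<inter> sd B C = sd (A \<inter> B) (A \<inter> C)" unfolding sd_def by auto

lemma cl_sign_sd1:
  fixes A B C :: "'n::{finite,linorder} set"
  shows "cl_sign (sd A B) C = cl_sign A C * cl_sign B C"
  unfolding cl_sign_alt invp_sd1 int_sd1
  by (subst neg1_pow_card_sd, simp, simp)+ (simp add: algebra_simps)

lemma cl_sign_sd2:
  fixes A B C :: "'n::{finite,linorder} set"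
  shows "cl_sign A (sd B C) = cl_sign A B * cl_sign A C"
  unfolding cl_sign_alt invp_sd2 int_sd2
  by (subst neg1_pow_card_sd, simp, simp)+ (simp add: algebra_simps)

lemma cl_sign_assoc:
  fixes A B C :: "'n::{finite,linorder} set"
  shows "cl_sign (sd A B) C * cl_sign A B = cl_sign A (sd B C) * cl_sign B C"
  unfolding cl_sign_sd1 cl_sign_sd2 by (simp add: algebra_simps)

lemma cl_mult_assoc:
  fixes a b c :: "'n::{finite,linorder} cl"
  shows "cl_mult (cl_mult a b) c = cl_mult a (cl_mult b c)"
proof
  fix D :: "'n set"
  have inj: "\<And>A::'n set. inj (sd A)" by (metis injI sd_sd)
  have "cl_mult (cl_mult a b) c D
     = (\<Sum>X\<in>UNIV. \<Sum>A\<in>UNIV. cl_sign X (sd X D) * (cl_sign A (sd A X) * a A * b (sd A X)) * c (sd X D))"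
    unfolding cl_mult_alt[of "cl_mult a b"] cl_mult_alt[of a b]
    by (simp add: sum_distrib_left sum_distrib_right)
  also have "\<dots> = (\<Sum>A\<in>UNIV. \<Sum>X\<in>UNIV. cl_sign X (sd X D) * (cl_sign A (sd A X) * a A * b (sd A X)) * c (sd X D))"
    by (rule sum.swap)
  also have "\<dots> = (\<Sum>A\<in>UNIV. \<Sum>B\<in>UNIV. cl_sign (sd A B) (sd (sd A B) D) * (cl_sign A B * a A * b B) * c (sd (sd A B) D))"
  proof (rule sum.cong[OF refl])
    fix A :: "'n set"
    show "(\<Sum>X\<in>UNIV. cl_sign X (sd X D) * (cl_sign A (sd A X) * a A * b (sd A X)) * c (sd X D))
      = (\<Sum>B\<in>UNIV. cl_sign (sd A B) (sd (sd A B) D) * (cl_sign A B * a A * b B) * c (sd (sd A B) D))"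
      by (rule sum.reindex_bij_witness[where i="sd A" and j="sd A"]) auto
  qed
  also have "\<dots> = (\<Sum>A\<in>UNIV. \<Sum>B\<in>UNIV. cl_sign A (sd A D) * a A * (cl_sign B (sd B (sd A D)) * b B * c (sd B (sd A D))))"
  proof (rule sum.cong[OF refl], rule sum.cong[OF refl])
    fix A B :: "'n set"
    have e: "sd (sd A B) D = sd B (sd A D)" unfolding sd_def by blast
    have e2: "sd A D = sd B (sd B (sd A D))" by simp
    show "cl_sign (sd A B) (sd (sd A B) D) * (cl_sign A B * a A * b B) * c (sd (sd A B) D)
        = cl_sign A (sd A D) * a A * (cl_sign B (sd B (sd A D)) * b B * c (sd B (sd A D)))"
      using cl_sign_assoc[of A B "sd B (sd A D)"] unfolding e
      by (simp add: algebra_simps)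
  qed
  also have "\<dots> = cl_mult a (cl_mult b c) D"
    unfolding cl_mult_alt[of a] cl_mult_alt[of b c]
    by (simp add: sum_distrib_left sum_distrib_right mult.assoc)
  finally show "cl_mult (cl_mult a b) c D = cl_mult a (cl_mult b c) D" .
qed



lemma fsum_apply: "(\<Sum>i\<in>I. f i) x = (\<Sum>i\<in>I. f i x)"
  by (induction I rule: infinite_finite_induct) auto

definition cl_smul :: "complex \<Rightarrow> 'n cl \<Rightarrow> 'n cl" where
  "cl_smul c a = (\<lambda>A. c * a A)"

context
  fixes a b c :: "'n::{finite,linorder} cl"
begin
lemma cl_mult_add_left: "cl_mult (a + b) c = cl_mult a c + cl_mult b c"
  by (rule ext) (simp add: cl_mult_alt sum.distrib[symmetric] algebra_simps)
lemma cl_mult_add_right: "cl_mult a (b + c) = cl_mult a b + cl_mult a c"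
  by (rule ext) (simp add: cl_mult_alt sum.distrib[symmetric] algebra_simps)
lemma cl_mult_diff_left: "cl_mult (a - b) c = cl_mult a c - cl_mult b c"
  by (rule ext) (simp add: cl_mult_alt sum_subtractf[symmetric] algebra_simps)
lemma cl_mult_diff_right: "cl_mult a (b - c) = cl_mult a b - cl_mult a c"
  by (rule ext) (simp add: cl_mult_alt sum_subtractf[symmetric] algebra_simps)
lemma cl_mult_minus_left: "cl_mult (- a) c = - cl_mult a c"
  by (rule ext) (simp add: cl_mult_alt sum_negf[symmetric] algebra_simps)
lemma cl_mult_minus_right: "cl_mult a (- c) = - cl_mult a c"
  by (rule ext) (simp add: cl_mult_alt sum_negf[symmetric] algebra_simps)
lemma cl_mult_zero_left[simp]: "cl_mult 0 c = 0"
  by (rule ext) (simp add: cl_mult_alt)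
lemma cl_mult_zero_right[simp]: "cl_mult a 0 = 0"
  by (rule ext) (simp add: cl_mult_alt)
lemma cl_mult_smul_left: "cl_mult (cl_smul k a) c = cl_smul k (cl_mult a c)"
  by (rule ext) (simp add: cl_mult_alt cl_smul_def sum_distrib_left algebra_simps)
lemma cl_mult_smul_right: "cl_mult a (cl_smul k c) = cl_smul k (cl_mult a c)"
  by (rule ext) (simp add: cl_mult_alt cl_smul_def sum_distrib_left algebra_simps)
end

lemma cl_mult_sum_left:
  fixes c :: "'n::{finite,linorder} cl"
  shows "cl_mult (\<Sum>i\<in>I. f i) c = (\<Sum>i\<in>I. cl_mult (f i) c)"
  by (rule ext) (simp add: cl_mult_alt fsum_apply sum_distrib_left sum_distrib_right sum.swap[of _ I])
lemma cl_mult_sum_right: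
  fixes c :: "'n::{finite,linorder} cl"
  shows "cl_mult c (\<Sum>i\<in>I. f i) = (\<Sum>i\<in>I. cl_mult c (f i))"
  by (rule ext) (simp add: cl_mult_alt fsum_apply sum_distrib_left sum_distrib_right sum.swap[of _ I])

lemma cl_smul_add: "cl_smul k (a + b) = cl_smul k a + cl_smul k b"
  by (rule ext) (simp add: cl_smul_def algebra_simps)
lemma cl_smul_diff: "cl_smul k (a - b) = cl_smul k a - cl_smul k b"
  by (rule ext) (simp add: cl_smul_def algebra_simps)
lemma cl_smul_minus: "cl_smul k (- a) = - cl_smul k a"
  by (rule ext) (simp add: cl_smul_def algebra_simps)
lemma cl_smul_smul: "cl_smul k (cl_smul l a) = cl_smul (k * l) a"
  by (rule ext) (simp add: cl_smul_def algebra_simps)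
lemma cl_smul_one[simp]: "cl_smul 1 a = a"
  by (rule ext) (simp add: cl_smul_def)
lemma cl_smul_zero[simp]: "cl_smul 0 a = 0" "cl_smul k 0 = 0"
  by (rule ext, simp add: cl_smul_def)+
lemma cl_smul_add_left: "cl_smul (k + l) a = cl_smul k a + cl_smul l a"
  by (rule ext) (simp add: cl_smul_def algebra_simps)
lemma cl_smul_sum: "cl_smul k (\<Sum>i\<in>I. f i) = (\<Sum>i\<in>I. cl_smul k (f i))"
  by (rule ext) (simp add: cl_smul_def fsum_apply sum_distrib_left)

lemma cl_sign_empty[simp]: "cl_sign {} B = 1" "cl_sign A {} = 1"
  unfolding cl_sign_def by auto

lemma cl_blade_mult:
  fixes A B :: "'n::{finite,linorder} set"
  shows "cl_mult (cl_blade a A) (cl_blade b B) = cl_blade (cl_sign A B * a * b) (sd A B)"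
proof
  fix D
  have "cl_mult (cl_blade a A) (cl_blade b B) D
      = (\<Sum>X\<in>UNIV. if X = A then cl_sign A (sd A D) * a * cl_blade b B (sd A D) else 0)"
    unfolding cl_mult_alt by (intro sum.cong refl) (simp add: cl_blade_def)
  also have "\<dots> = cl_sign A (sd A D) * a * cl_blade b B (sd A D)" by (simp add: sum.delta)
  also have "\<dots> = cl_blade (cl_sign A B * a * b) (sd A B) D"
    unfolding cl_blade_def by (auto simp: sd_eq_iff)
  finally show "cl_mult (cl_blade a A) (cl_blade b B) D = cl_blade (cl_sign A B * a * b) (sd A B) D" .
qed

lemma cl_scalar_mult_left:
  fixes x :: "'n::{finite,linorder} cl"
  shows "cl_mult (cl_scalar c) x = cl_smul c x"
proof
  fix D
  show "cl_mult (cl_scalar c) x D = cl_smul c x D"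
    unfolding cl_mult_alt cl_scalar_def cl_smul_def cl_blade_def
    by (simp add: if_distrib if_distribR sum.delta cong: if_cong)
qed

lemma cl_scalar_mult_right:
  fixes x :: "'n::{finite,linorder} cl"
  shows "cl_mult x (cl_scalar c) = cl_smul c x"
proof
  fix D
  have "cl_mult x (cl_scalar c) D = (\<Sum>A\<in>UNIV. if A = D then x A * c else 0)"
    unfolding cl_mult_alt cl_scalar_def cl_blade_def
    by (intro sum.cong refl) (auto simp: sd_def)
  then show "cl_mult x (cl_scalar c) D = cl_smul c x D"
    by (simp add: sum.delta' cl_smul_def)
qed

lemma cl_scalar_add: "cl_scalar (a + b) = cl_scalar a + cl_scalar b"
  by (rule ext) (simp add: cl_scalar_def cl_blade_def)
lemma cl_scalar_0[simp]: "cl_scalar 0 = 0"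
  by (rule ext) (simp add: cl_scalar_def cl_blade_def)
lemma cl_scalar_sum: "cl_scalar (\<Sum>i\<in>I. f i) = (\<Sum>i\<in>I. cl_scalar (f i))"
  by (rule ext) (simp add: cl_scalar_def cl_blade_def fsum_apply)
lemma cl_smul_scalar: "cl_smul k (cl_scalar c) = cl_scalar (k * c)"
  by (rule ext) (simp add: cl_scalar_def cl_blade_def cl_smul_def)

lemma cl_e_anticomm:
  fixes j k :: "'n::{finite,linorder}"
  shows "cl_mult (cl_e j) (cl_e k) + cl_mult (cl_e k) (cl_e j) = cl_scalar (if j = k then -2 else 0)"
proof (cases "j = k")
  case True
  have kkset: "{(a, b). a \<in> {k} \<and> b \<in> {k} \<and> b < a} = {}" by auto
  have kk: "cl_sign {k} {k} = -1" unfolding cl_sign_def kkset by simp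
  show ?thesis using True
    by (simp add: cl_e_def cl_blade_mult cl_scalar_def kk)
       (rule ext, simp add: cl_blade_def kk)
next
  case False
  have s: "cl_sign {j} {k} = - cl_sign {k} {j}"
  proof (cases "k < j")
    case True
    have e1: "{(a, b). a \<in> {j} \<and> b \<in> {k} \<and> b < a} = {(j,k)}" using True by auto
    have e2: "{(a, b). a \<in> {k} \<and> b \<in> {j} \<and> b < a} = {}" using True by auto
    show ?thesis using False unfolding cl_sign_def e1 e2 by simp
  next
    case c: False
    then have "j < k" using False by auto
    have e1: "{(a, b). a \<in> {k} \<and> b \<in> {j} \<and> b < a} = {(k,j)}" using \<open>j < k\<close> by auto
    have e2: "{(a, b). a \<in> {j} \<and> b \<in> {k} \<and> b < a} = {}" using \<open>j < k\<close> by auto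
    show ?thesis using False unfolding cl_sign_def e1 e2 by simp
  qed
  have sd: "sd {k} {j} = sd {j} {k}" by (rule sd_comm)
  show ?thesis using False
    by (simp add: cl_e_def cl_blade_mult sd s) (rule ext, simp add: cl_blade_def)
qed

definition cl_E :: "'n cl" where "cl_E = cl_blade \<i> UNIV"

lemma card_less_greater:
  fixes j :: "'n::{finite,linorder}"
  shows "card {b. b < j} + card {a. j < a} = CARD('n) - 1"
proof -
  have "UNIV - {j} = {b. b < j} \<union> {a. j < a}" by auto
  then have "card (UNIV - {j}) = card ({b. b < j} \<union> {a. j < a})" by simp
  also have "\<dots> = card {b. b < j} + card {a. j < a}" by (intro card_Un_disjoint) auto
  finally show ?thesis by simp
qed

lemma cl_e_E:
  fixes j :: "'n::{finite,linorder}"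
  assumes "even CARD('n)"
  shows "cl_mult (cl_e j) cl_E = - cl_mult cl_E (cl_e j)"
proof -
  have c1: "card {(a, b). a = j \<and> b < a} = card {b. b < j}"
  proof -
    have "{(a, b). a = j \<and> b < a} = (\<lambda>b. (j, b)) ` {b. b < j}" by auto
    then show ?thesis by (simp add: card_image inj_on_def)
  qed
  have c2: "card {(a, b). b = j \<and> b < a} = card {a. j < a}"
  proof -
    have "{(a, b). b = j \<and> b < a} = (\<lambda>a. (a, j)) ` {a. j < a}" by auto
    then show ?thesis by (simp add: card_image inj_on_def)
  qed
  have pos: "CARD('n) \<ge> 1" by (simp add: Suc_leI)
  have odd: "odd (card {b. b < j} + card {a. j < a})"
    using card_less_greater[of j] assms pos by simp
  have s: "cl_sign {j} UNIV = - cl_sign UNIV {j}"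
  proof -
    have "cl_sign {j} UNIV = (-1) ^ (card {b. b < j} + 1)"
      unfolding cl_sign_def using c1 by simp
    moreover have "cl_sign UNIV {j} = (-1) ^ (card {a. j < a} + 1)"
      unfolding cl_sign_def using c2 by simp
    moreover have "(-1::complex) ^ (card {b. b < j}) = - ((-1) ^ card {a. j < a})"
    proof -
      have "(-1::complex) ^ (card {b. b < j}) * (-1) ^ card {a. j < a} = -1"
        using odd by (simp add: power_add[symmetric])
      moreover have "(-1::complex) ^ card {a. j < a} * (-1) ^ card {a. j < a} = 1"
        by (simp add: power_add[symmetric])
      ultimately show ?thesis by (metis minus_equation_iff mult.commute mult_1 mult_minus_left mult.assoc)
    qed
    ultimately show ?thesis by simp
  qed
  show ?thesis unfolding cl_e_def cl_E_def cl_blade_mult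
    by (rule ext) (simp add: cl_blade_def s sd_comm)
qed

lemma card_pairs_less:
  "2 * card {(a, b::'n::{finite,linorder}). b < a} + CARD('n) = CARD('n) * CARD('n)"
proof -
  let ?P = "{(a, b::'n). b < a}" and ?Q = "{(a, b::'n). a < b}" and ?D = "{(a, b::'n). a = b}"
  have u: "(UNIV :: ('n \<times> 'n) set) = ?P \<union> ?Q \<union> ?D" by auto
  have "card (UNIV :: ('n \<times> 'n) set) = card ?P + card ?Q + card ?D"
    unfolding u by (subst card_Un_disjoint, auto)+
  moreover have "card ?Q = card ?P"
  proof -
    have "?Q = (\<lambda>(a,b). (b,a)) ` ?P" by auto
    moreover have "inj_on (\<lambda>(a,b). (b,a)) ?P" by (auto simp: inj_on_def)
    ultimately show ?thesis by (simp add: card_image)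
  qed
  moreover have "card ?D = CARD('n)"
  proof -
    have "?D = (\<lambda>a. (a,a)) ` UNIV" by auto
    then show ?thesis by (simp add: card_image inj_on_def)
  qed
  ultimately show ?thesis by (simp add: card_cartesian_product)
qed

lemma cl_E_E:
  assumes "even CARD('n::{finite,linorder})" and "odd (CARD('n) div 2)"
  shows "cl_mult (cl_E :: 'n cl) cl_E = cl_scalar 1"
proof -
  obtain m where m: "CARD('n) = 2 * m" using assms(1) by blast
  have om: "odd m" using assms(2) m by simp
  define X where "X = card {(a, b::'n). b < a}"
  have "2 * X + 2 * m = 4 * m * m" using card_pairs_less[where 'n='n] m X_def by simp
  then have "X + m = 2 * m * m" by simp
  then have "X = 2 * m * m - m" by simp
  then have "odd (X + CARD('n))" using om m
    by (metis \<open>X + m = 2 * m * m\<close> add.commute dvd_add_right_iff dvd_mult2 even_add even_mult_iff mult_2 )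
  then have "cl_sign (UNIV::'n set) UNIV = -1"
    unfolding cl_sign_def X_def by simp
  then show ?thesis unfolding cl_E_def cl_blade_mult cl_scalar_def
    by (simp add: sd_def)
qed

lemma cl_vec_sum: "cl_vec v = (\<Sum>j\<in>UNIV. cl_smul (complex_of_real (v $ j)) (cl_e j))"
  by (rule ext) (auto simp: cl_vec_def cl_smul_def cl_e_def cl_blade_def fsum_apply intro!: sum.cong)



lemma pd_has_derivative:
  assumes "(F has_derivative F') (at x)"
  shows "pd j F x = F' (axis j 1)"
  using assms unfolding pd_def by (metis frechet_derivative_at)

lemma line_vector_derivative:
  fixes \<phi> :: "real ^ 'n::finite \<Rightarrow> complex"
  assumes "\<phi> differentiable (at (p + t *\<^sub>R axis b 1))"
  shows "((\<lambda>t. \<phi> (p + t *\<^sub>R axis b 1)) has_vector_derivative pd b \<phi> (p + t *\<^sub>R axis b 1)) (at t)"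
proof -
  let ?D = "frechet_derivative \<phi> (at (p + t *\<^sub>R axis b 1))"
  have d: "(\<phi> has_derivative ?D) (at (p + t *\<^sub>R axis b 1))"
    using assms frechet_derivative_works by blast
  have l: "((\<lambda>t. p + t *\<^sub>R axis b 1) has_derivative (\<lambda>h. h *\<^sub>R axis b 1)) (at t)"
    by (auto intro!: derivative_eq_intros)
  have "((\<lambda>t. \<phi> (p + t *\<^sub>R axis b 1)) has_derivative (\<lambda>h. ?D (h *\<^sub>R axis b 1))) (at t)"
    using has_derivative_compose[OF l d] by (simp add: o_def)
  moreover have "(\<lambda>h. ?D (h *\<^sub>R axis b 1)) = (\<lambda>h. h *\<^sub>R pd b \<phi> (p + t *\<^sub>R axis b 1))"
    using linear_scale[OF has_derivative_linear[OF d]] unfolding pd_def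
    by (simp add: linear_cmul[OF has_derivative_linear[OF d]])
  ultimately show ?thesis unfolding has_vector_derivative_def by simp
qed

lemma schwarz_key:
  fixes \<phi> :: "real ^ 'n::finite \<Rightarrow> complex"
  assumes "open \<Omega>" "x \<in> \<Omega>" "\<forall>y\<in>\<Omega>. \<phi> differentiable (at y)"
    and "pd b \<phi> differentiable (at x)"
    and "\<epsilon> > 0"
  shows "\<exists>\<delta>>0. \<forall>s. 0 < s \<and> s < \<delta> \<longrightarrow>
    norm (\<phi> (x + s *\<^sub>R axis a 1 + s *\<^sub>R axis b 1) - \<phi> (x + s *\<^sub>R axis a 1)
          - \<phi> (x + s *\<^sub>R axis b 1) + \<phi> x - complex_of_real (s^2) * pd a (pd b \<phi>) x) \<le> 9 * \<epsilon> * s^2"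
proof -
  define u :: "real ^ 'n" where "u = axis a 1"
  define v :: "real ^ 'n" where "v = axis b 1"
  have nu: "norm u = 1" "norm v = 1" unfolding u_def v_def by simp_all
  define L where "L = frechet_derivative (pd b \<phi>) (at x)"
  have dL: "(pd b \<phi> has_derivative L) (at x)"
    using assms(4) frechet_derivative_works L_def by blast
  have c: "pd a (pd b \<phi>) x = L u" unfolding pd_def[of a] L_def u_def by simp
  have lin: "linear L" using dL by (rule has_derivative_linear)
  obtain d where d: "d > 0" "\<And>y. norm (y - x) < d \<Longrightarrow>
      norm (pd b \<phi> y - pd b \<phi> x - L (y - x)) \<le> \<epsilon> * norm (y - x)"
    using dL[unfolded has_derivative_at_alt] assms(5) by blast
  obtain r where r: "r > 0" "ball x r \<subseteq> \<Omega>" using assms(1,2) open_contains_ball by blast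
  define \<delta> where "\<delta> = min (d/2) (r/2)"
  have "\<delta> > 0" using d r by (simp add: \<delta>_def)
  moreover have "norm (\<phi> (x + s *\<^sub>R u + s *\<^sub>R v) - \<phi> (x + s *\<^sub>R u)
          - \<phi> (x + s *\<^sub>R v) + \<phi> x - complex_of_real (s^2) * L u) \<le> 9 * \<epsilon> * s^2"
    if s: "0 < s" "s < \<delta>" for s
  proof -
    define H where "H t = \<phi> (x + s *\<^sub>R u + t *\<^sub>R v) - \<phi> (x + t *\<^sub>R v)" for t
    define H' where "H' t = pd b \<phi> (x + s *\<^sub>R u + t *\<^sub>R v) - pd b \<phi> (x + t *\<^sub>R v)" for t
    have seg: "closed_segment 0 s = {0..s}" using s by (simp add: closed_segment_eq_real_ivl)
    have nrm1: "norm (s *\<^sub>R u + t *\<^sub>R v) \<le> 2 * s" if "t \<in> {0..s}" for t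
    proof -
      have "norm (s *\<^sub>R u + t *\<^sub>R v) \<le> norm (s *\<^sub>R u) + norm (t *\<^sub>R v)" by (rule norm_triangle_ineq)
      also have "\<dots> = s + t" using nu that s by simp
      finally show ?thesis using that by simp
    qed
    have nrm2: "norm (t *\<^sub>R v) \<le> s" if "t \<in> {0..s}" for t using nu that by simp
    have inO: "x + s *\<^sub>R u + t *\<^sub>R v \<in> \<Omega>" "x + t *\<^sub>R v \<in> \<Omega>" if "t \<in> {0..s}" for t
    proof -
      have "dist x (x + s *\<^sub>R u + t *\<^sub>R v) = norm (s *\<^sub>R u + t *\<^sub>R v)"
        by (metis add.assoc add_diff_cancel_left' dist_commute dist_norm)
      then have "dist x (x + s *\<^sub>R u + t *\<^sub>R v) < r" using nrm1[OF that] s unfolding \<delta>_def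
        by simp
      then show "x + s *\<^sub>R u + t *\<^sub>R v \<in> \<Omega>" using r by auto
      have "dist x (x + t *\<^sub>R v) = norm (t *\<^sub>R v)"
        by (metis add_diff_cancel_left' dist_commute dist_norm)
      then have "dist x (x + t *\<^sub>R v) < r" using nrm2[OF that] s unfolding \<delta>_def by simp
      then show "x + t *\<^sub>R v \<in> \<Omega>" using r by auto
    qed
    have der: "(H has_vector_derivative H' t) (at t within {0..s})" if "t \<in> {0..s}" for t
    proof -
      have 1: "((\<lambda>t. \<phi> ((x + s *\<^sub>R u) + t *\<^sub>R v)) has_vector_derivative pd b \<phi> ((x + s *\<^sub>R u) + t *\<^sub>R v)) (at t)"
        unfolding v_def by (rule line_vector_derivative) (use inO[OF that] assms(3) v_def in auto)
      have 2: "((\<lambda>t. \<phi> (x + t *\<^sub>R v)) has_vector_derivative pd b \<phi> (x + t *\<^sub>R v)) (at t)"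
        unfolding v_def by (rule line_vector_derivative) (use inO[OF that] assms(3) v_def in auto)
      show ?thesis unfolding H_def H'_def
        by (rule has_vector_derivative_at_within, rule has_vector_derivative_diff[OF 1 2])
    qed
    have B1: "norm (H' t - complex_of_real s * L u) \<le> 3 * \<epsilon> * s" if "t \<in> {0..s}" for t
    proof -
      have e: "H' t - complex_of_real s * L u
        = (pd b \<phi> (x + (s *\<^sub>R u + t *\<^sub>R v)) - pd b \<phi> x - L (s *\<^sub>R u + t *\<^sub>R v))
          - (pd b \<phi> (x + t *\<^sub>R v) - pd b \<phi> x - L (t *\<^sub>R v))"
        unfolding H'_def using linear_add[OF lin] linear_scale[OF lin]
        by (simp add: add.assoc scaleR_conv_of_real)
      have n1: "norm (pd b \<phi> (x + (s *\<^sub>R u + t *\<^sub>R v)) - pd b \<phi> x - L (s *\<^sub>R u + t *\<^sub>R v)) \<le> \<epsilon> * (2 * s)"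
      proof -
        have "norm (x + (s *\<^sub>R u + t *\<^sub>R v) - x) < d" using nrm1[OF that] s unfolding \<delta>_def by simp
        from d(2)[OF this] have "norm (pd b \<phi> (x + (s *\<^sub>R u + t *\<^sub>R v)) - pd b \<phi> x - L (s *\<^sub>R u + t *\<^sub>R v)) \<le> \<epsilon> * norm (s *\<^sub>R u + t *\<^sub>R v)"
          by simp
        also have "\<dots> \<le> \<epsilon> * (2 * s)" using nrm1[OF that] assms(5) by (intro mult_left_mono) auto
        finally show ?thesis .
      qed
      have n2: "norm (pd b \<phi> (x + t *\<^sub>R v) - pd b \<phi> x - L (t *\<^sub>R v)) \<le> \<epsilon> * s"
      proof -
        have "norm (x + t *\<^sub>R v - x) < d" using nrm2[OF that] s unfolding \<delta>_def by simp
        from d(2)[OF this] have "norm (pd b \<phi> (x + t *\<^sub>R v) - pd b \<phi> x - L (t *\<^sub>R v)) \<le> \<epsilon> * norm (t *\<^sub>R v)"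
          by simp
        also have "\<dots> \<le> \<epsilon> * s" using nrm2[OF that] assms(5) by (intro mult_left_mono) auto
        finally show ?thesis .
      qed
      show ?thesis unfolding e
        using norm_triangle_ineq4[of "pd b \<phi> (x + (s *\<^sub>R u + t *\<^sub>R v)) - pd b \<phi> x - L (s *\<^sub>R u + t *\<^sub>R v)"
            "pd b \<phi> (x + t *\<^sub>R v) - pd b \<phi> x - L (t *\<^sub>R v)"] n1 n2
        by linarith
    qed
    have 0: "0 \<in> {0..s}" "s \<in> {0..s}" using s by auto
    have "norm (H s - H 0 - (s - 0) *\<^sub>R H' 0) \<le> norm (s - 0) * (6 * \<epsilon> * s)"
    proof (rule vector_differentiable_bound_linearization[where S="{0..s}"])
      show "\<And>t. t \<in> {0..s} \<Longrightarrow> (H has_vector_derivative H' t) (at t within {0..s})" by (rule der)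
      show "closed_segment 0 s \<subseteq> {0..s}" using seg by simp
      show "0 \<in> {0..s}" by (rule 0)
      fix t assume t: "t \<in> {0..s}"
      have "norm (H' t - H' 0) \<le> norm (H' t - complex_of_real s * L u) + norm (H' 0 - complex_of_real s * L u)"
        using norm_triangle_ineq4[of "H' t - complex_of_real s * L u" "H' 0 - complex_of_real s * L u"]
        by simp
      also have "\<dots> \<le> 6 * \<epsilon> * s" using B1[OF t] B1[OF 0(1)] by simp
      finally show "norm (H' t - H' 0) \<le> 6 * \<epsilon> * s" .
    qed
    then have i1: "norm (H s - H 0 - complex_of_real s * H' 0) \<le> 6 * \<epsilon> * s^2"
      using s by (simp add: scaleR_conv_of_real power2_eq_square mult_ac)
    have i2: "norm (complex_of_real s * H' 0 - complex_of_real (s^2) * L u) \<le> 3 * \<epsilon> * s^2"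
    proof -
      have "complex_of_real s * H' 0 - complex_of_real (s^2) * L u = complex_of_real s * (H' 0 - complex_of_real s * L u)"
        by (simp add: algebra_simps power2_eq_square)
      then have "norm (complex_of_real s * H' 0 - complex_of_real (s^2) * L u) = s * norm (H' 0 - complex_of_real s * L u)"
        using s by (simp add: norm_mult)
      also have "\<dots> \<le> s * (3 * \<epsilon> * s)" using B1[OF 0(1)] s by (intro mult_left_mono) auto
      finally show ?thesis by (simp add: power2_eq_square mult_ac)
    qed
    have e: "\<phi> (x + s *\<^sub>R u + s *\<^sub>R v) - \<phi> (x + s *\<^sub>R u) - \<phi> (x + s *\<^sub>R v) + \<phi> x - complex_of_real (s^2) * L u
        = (H s - H 0 - complex_of_real s * H' 0) + (complex_of_real s * H' 0 - complex_of_real (s^2) * L u)"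
      unfolding H_def by simp
    show ?thesis unfolding e using norm_triangle_ineq[of "H s - H 0 - complex_of_real s * H' 0"
        "complex_of_real s * H' 0 - complex_of_real (s^2) * L u"] i1 i2
      by linarith
  qed
  ultimately show ?thesis unfolding c u_def v_def by blast
qed

lemma schwarz:
  fixes \<phi> :: "real ^ 'n::finite \<Rightarrow> complex"
  assumes "open \<Omega>" "x \<in> \<Omega>" "\<forall>y\<in>\<Omega>. \<phi> differentiable (at y)"
    and "pd a \<phi> differentiable (at x)" "pd b \<phi> differentiable (at x)"
  shows "pd a (pd b \<phi>) x = pd b (pd a \<phi>) x"
proof (rule ccontr)
  let ?c1 = "pd a (pd b \<phi>) x" and ?c2 = "pd b (pd a \<phi>) x"
  assume ne: "?c1 \<noteq> ?c2"
  define \<epsilon> where "\<epsilon> = norm (?c1 - ?c2) / 36"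
  have ep: "\<epsilon> > 0" using ne by (simp add: \<epsilon>_def)
  obtain d1 where d1: "d1 > 0" "\<forall>s. 0 < s \<and> s < d1 \<longrightarrow>
    norm (\<phi> (x + s *\<^sub>R axis a 1 + s *\<^sub>R axis b 1) - \<phi> (x + s *\<^sub>R axis a 1)
          - \<phi> (x + s *\<^sub>R axis b 1) + \<phi> x - complex_of_real (s^2) * ?c1) \<le> 9 * \<epsilon> * s^2"
    using schwarz_key[OF assms(1,2,3,5) ep] by blast
  obtain d2 where d2: "d2 > 0" "\<forall>s. 0 < s \<and> s < d2 \<longrightarrow>
    norm (\<phi> (x + s *\<^sub>R axis b 1 + s *\<^sub>R axis a 1) - \<phi> (x + s *\<^sub>R axis b 1)
          - \<phi> (x + s *\<^sub>R axis a 1) + \<phi> x - complex_of_real (s^2) * ?c2) \<le> 9 * \<epsilon> * s^2"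
    using schwarz_key[OF assms(1,2,3,4) ep] by blast
  define s where "s = min d1 d2 / 2"
  have s: "0 < s" "s < d1" "s < d2" using d1 d2 by (auto simp: s_def)
  define \<Delta> where "\<Delta> = \<phi> (x + s *\<^sub>R axis a 1 + s *\<^sub>R axis b 1) - \<phi> (x + s *\<^sub>R axis a 1)
          - \<phi> (x + s *\<^sub>R axis b 1) + \<phi> x"
  have e2: "\<phi> (x + s *\<^sub>R axis b 1 + s *\<^sub>R axis a 1) - \<phi> (x + s *\<^sub>R axis b 1)
          - \<phi> (x + s *\<^sub>R axis a 1) + \<phi> x = \<Delta>" unfolding \<Delta>_def by (simp add: algebra_simps)
  have n1: "norm (\<Delta> - complex_of_real (s^2) * ?c1) \<le> 9 * \<epsilon> * s^2" using d1(2) s unfolding \<Delta>_def by blast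
  have n2: "norm (\<Delta> - complex_of_real (s^2) * ?c2) \<le> 9 * \<epsilon> * s^2" using d2(2) s e2 by metis
  have "norm (complex_of_real (s^2) * (?c1 - ?c2)) \<le> 18 * \<epsilon> * s^2"
  proof -
    have "complex_of_real (s^2) * (?c1 - ?c2) = (\<Delta> - complex_of_real (s^2) * ?c2) - (\<Delta> - complex_of_real (s^2) * ?c1)"
      by (simp add: algebra_simps)
    then show ?thesis using norm_triangle_ineq4[of "\<Delta> - complex_of_real (s^2) * ?c2" "\<Delta> - complex_of_real (s^2) * ?c1"] n1 n2
      by simp
  qed
  moreover have "norm (complex_of_real (s^2) * (?c1 - ?c2)) = s^2 * norm (?c1 - ?c2)"
    by (simp add: norm_mult norm_power)
  ultimately have "s^2 * norm (?c1 - ?c2) \<le> s^2 * (18 * \<epsilon>)" by (simp add: algebra_simps)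
  then have "norm (?c1 - ?c2) \<le> 18 * \<epsilon>" using s by (simp add: mult_le_cancel_left)
  then show False using ep unfolding \<epsilon>_def by simp
qed



type_synonym 'n rfun = "real ^ 'n \<Rightarrow> complex"

lemma pd_add:
  fixes F G :: "real ^ 'n::finite \<Rightarrow> complex"
  assumes "F differentiable (at x)" "G differentiable (at x)"
  shows "pd j (\<lambda>y. F y + G y) x = pd j F x + pd j G x"
proof -
  have "((\<lambda>y. F y + G y) has_derivative (\<lambda>h. frechet_derivative F (at x) h + frechet_derivative G (at x) h)) (at x)"
    using assms by (intro has_derivative_add) (auto simp: frechet_derivative_works[symmetric])
  from pd_has_derivative[OF this, of j] show ?thesis by (simp add: pd_def)
qed

lemma pd_diff:
  fixes F G :: "real ^ 'n::finite \<Rightarrow> complex"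
  assumes "F differentiable (at x)" "G differentiable (at x)"
  shows "pd j (\<lambda>y. F y - G y) x = pd j F x - pd j G x"
proof -
  have "((\<lambda>y. F y - G y) has_derivative (\<lambda>h. frechet_derivative F (at x) h - frechet_derivative G (at x) h)) (at x)"
    using assms by (intro has_derivative_diff) (auto simp: frechet_derivative_works[symmetric])
  from pd_has_derivative[OF this, of j] show ?thesis by (simp add: pd_def)
qed

lemma pd_mult:
  fixes F G :: "real ^ 'n::finite \<Rightarrow> complex"
  assumes "F differentiable (at x)" "G differentiable (at x)"
  shows "pd j (\<lambda>y. F y * G y) x = F x * pd j G x + pd j F x * G x"
proof -
  have "((\<lambda>y. F y * G y) has_derivative (\<lambda>h. F x * frechet_derivative G (at x) h + frechet_derivative F (at x) h * G x)) (at x)"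
    using assms by (intro has_derivative_mult) (auto simp: frechet_derivative_works[symmetric])
  from pd_has_derivative[OF this, of j] show ?thesis by (simp add: pd_def)
qed

lemma pd_const[simp]: "pd j (\<lambda>y. c) x = 0"
  unfolding pd_def by simp

lemma pd_cmult:
  fixes F :: "real ^ 'n::finite \<Rightarrow> complex"
  assumes "F differentiable (at x)"
  shows "pd j (\<lambda>y. c * F y) x = c * pd j F x"
  using pd_mult[of "\<lambda>y. c" x F j] assms by simp

lemma pd_sum:
  fixes F :: "'i \<Rightarrow> real ^ 'n::finite \<Rightarrow> complex"
  assumes "finite I" "\<And>i. i \<in> I \<Longrightarrow> F i differentiable (at x)"
  shows "pd j (\<lambda>y. \<Sum>i\<in>I. F i y) x = (\<Sum>i\<in>I. pd j (F i) x)"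
  using assms
proof (induction I rule: finite_induct)
  case empty then show ?case by simp
next
  case (insert a I)
  have "pd j (\<lambda>y. \<Sum>i\<in>insert a I. F i y) x = pd j (\<lambda>y. F a y + (\<Sum>i\<in>I. F i y)) x"
    using insert by simp
  also have "\<dots> = pd j (F a) x + pd j (\<lambda>y. \<Sum>i\<in>I. F i y) x"
    using insert by (intro pd_add) (auto intro!: differentiable_sum)
  finally show ?case using insert by simp
qed

lemma pd_local:
  fixes F G :: "real ^ 'n::finite \<Rightarrow> complex"
  assumes "open \<Omega>" "x \<in> \<Omega>" "\<And>y. y \<in> \<Omega> \<Longrightarrow> F y = G y"
  shows "pd j F x = pd j G x"
proof -
  have "(F has_derivative D) (at x) \<longleftrightarrow> (G has_derivative D) (at x)" for D
  proof
    assume "(F has_derivative D) (at x)"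
    then show "(G has_derivative D) (at x)"
      by (rule has_derivative_transform_within_open[OF _ assms(1,2)]) (simp add: assms(3))
  next
    assume "(G has_derivative D) (at x)"
    then show "(F has_derivative D) (at x)"
      by (rule has_derivative_transform_within_open[OF _ assms(1,2)]) (simp add: assms(3))
  qed
  then show ?thesis unfolding pd_def frechet_derivative_def by simp
qed

subsection \<open>C1 closure\<close>

lemma C1_diffI: "C1_on \<Omega> F \<Longrightarrow> x \<in> \<Omega> \<Longrightarrow> F differentiable (at x)"
  unfolding C1_on_def by blast

lemma C1_contI: "C1_on \<Omega> F \<Longrightarrow> continuous_on \<Omega> F"
  unfolding C1_on_def
  by (meson continuous_at_imp_continuous_on differentiable_imp_continuous_within)

lemma C1_const: "C1_on \<Omega> (\<lambda>x. c)"
  unfolding C1_on_def by simp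

lemma C1_add:
  assumes "C1_on \<Omega> F" "C1_on \<Omega> G"
  shows "C1_on \<Omega> (\<lambda>x. F x + G x)"
  unfolding C1_on_def
proof safe
  fix x assume "x \<in> \<Omega>" then show "(\<lambda>x. F x + G x) differentiable at x"
    using C1_diffI[OF assms(1)] C1_diffI[OF assms(2)] by simp
next
  fix j
  have "continuous_on \<Omega> (\<lambda>x. pd j F x + pd j G x)"
    using assms unfolding C1_on_def by (auto intro!: continuous_on_add)
  then show "continuous_on \<Omega> (pd j (\<lambda>x. F x + G x))"
    by (rule continuous_on_cong[THEN iffD1, rotated 2]) (auto simp: pd_add C1_diffI[OF assms(1)] C1_diffI[OF assms(2)])
qed

lemma C1_diff:
  assumes "C1_on \<Omega> F" "C1_on \<Omega> G"
  shows "C1_on \<Omega> (\<lambda>x. F x - G x)"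
  unfolding C1_on_def
proof safe
  fix x assume "x \<in> \<Omega>" then show "(\<lambda>x. F x - G x) differentiable at x"
    using C1_diffI[OF assms(1)] C1_diffI[OF assms(2)] by simp
next
  fix j
  have "continuous_on \<Omega> (\<lambda>x. pd j F x - pd j G x)"
    using assms unfolding C1_on_def by (auto intro!: continuous_on_diff)
  then show "continuous_on \<Omega> (pd j (\<lambda>x. F x - G x))"
    by (rule continuous_on_cong[THEN iffD1, rotated 2]) (auto simp: pd_diff C1_diffI[OF assms(1)] C1_diffI[OF assms(2)])
qed

lemma C1_mult:
  assumes "C1_on \<Omega> F" "C1_on \<Omega> G"
  shows "C1_on \<Omega> (\<lambda>x. F x * G x)"
  unfolding C1_on_def
proof safe
  fix x assume "x \<in> \<Omega>" then show "(\<lambda>x. F x * G x) differentiable at x"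
    using C1_diffI[OF assms(1)] C1_diffI[OF assms(2)] by simp
next
  fix j
  have "continuous_on \<Omega> (\<lambda>x. F x * pd j G x + pd j F x * G x)"
    using assms C1_contI[OF assms(1)] C1_contI[OF assms(2)] unfolding C1_on_def
    by (auto intro!: continuous_on_add continuous_on_mult)
  then show "continuous_on \<Omega> (pd j (\<lambda>x. F x * G x))"
    by (rule continuous_on_cong[THEN iffD1, rotated 2]) (auto simp: pd_mult C1_diffI[OF assms(1)] C1_diffI[OF assms(2)])
qed

lemma C1_sum:
  assumes "finite I" "\<And>i. i \<in> I \<Longrightarrow> C1_on \<Omega> (F i)"
  shows "C1_on \<Omega> (\<lambda>x. \<Sum>i\<in>I. F i x)"
  using assms
proof (induction I rule: finite_induct)
  case empty then show ?case by (simp add: C1_const)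
next
  case (insert a I) then show ?case by (simp add: C1_add)
qed

lemma C1_if: "C1_on \<Omega> F \<Longrightarrow> C1_on \<Omega> (\<lambda>x. if P then F x else 0)"
  by (cases P) (simp_all add: C1_const)

subsection \<open>Clifford-valued functions\<close>

definition pd_cl :: "'n \<Rightarrow> (real ^ 'n::finite \<Rightarrow> 'n cl) \<Rightarrow> real ^ 'n \<Rightarrow> 'n cl" where
  "pd_cl j G x = (\<lambda>A. pd j (\<lambda>y. G y A) x)"

definition cl_diff :: "(real ^ 'n::finite \<Rightarrow> 'n cl) \<Rightarrow> real ^ 'n \<Rightarrow> bool" where
  "cl_diff G x \<longleftrightarrow> (\<forall>A. (\<lambda>y. G y A) differentiable (at x))"

lemma dirac_pd_cl: "dirac G x = (\<Sum>j\<in>UNIV. cl_mult (cl_e j) (pd_cl j G x))"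
  unfolding dirac_def pd_cl_def by simp

lemma cl_C1_diff: "cl_C1_on \<Omega> G \<Longrightarrow> x \<in> \<Omega> \<Longrightarrow> cl_diff G x"
  unfolding cl_C1_on_def cl_diff_def C1_on_def by blast

lemma pd_cl_add: "cl_diff G x \<Longrightarrow> cl_diff H x \<Longrightarrow> pd_cl j (\<lambda>y. G y + H y) x = pd_cl j G x + pd_cl j H x"
  unfolding pd_cl_def cl_diff_def by (rule ext) (simp add: pd_add)

lemma pd_cl_diff: "cl_diff G x \<Longrightarrow> cl_diff H x \<Longrightarrow> pd_cl j (\<lambda>y. G y - H y) x = pd_cl j G x - pd_cl j H x"
  unfolding pd_cl_def cl_diff_def by (rule ext) (simp add: pd_diff)

lemma cl_diff_add: "cl_diff G x \<Longrightarrow> cl_diff H x \<Longrightarrow> cl_diff (\<lambda>y. G y + H y) x"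
  unfolding cl_diff_def by simp

lemma cl_diff_diff: "cl_diff G x \<Longrightarrow> cl_diff H x \<Longrightarrow> cl_diff (\<lambda>y. G y - H y) x"
  unfolding cl_diff_def by simp

lemma cl_diff_multK:
  fixes G :: "real ^ 'n::{finite,linorder} \<Rightarrow> 'n cl"
  shows "cl_diff G x \<Longrightarrow> cl_diff (\<lambda>y. cl_mult (G y) K) x"
  unfolding cl_diff_def cl_mult_alt by (auto intro!: differentiable_sum differentiable_mult)

lemma pd_cl_multK:
  fixes G :: "real ^ 'n::{finite,linorder} \<Rightarrow> 'n cl"
  assumes "cl_diff G x"
  shows "pd_cl j (\<lambda>y. cl_mult (G y) K) x = cl_mult (pd_cl j G x) K"
proof
  fix D
  have "pd j (\<lambda>y. \<Sum>A\<in>UNIV. cl_sign A (sd A D) * G y A * K (sd A D)) x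
      = (\<Sum>A\<in>UNIV. pd j (\<lambda>y. cl_sign A (sd A D) * G y A * K (sd A D)) x)"
    using assms unfolding cl_diff_def by (intro pd_sum) auto
  also have "\<dots> = (\<Sum>A\<in>UNIV. cl_sign A (sd A D) * pd j (\<lambda>y. G y A) x * K (sd A D))"
  proof (intro sum.cong refl)
    fix A
    have "pd j (\<lambda>y. cl_sign A (sd A D) * G y A * K (sd A D)) x = pd j (\<lambda>y. (cl_sign A (sd A D) * K (sd A D)) * G y A) x"
      by (simp add: mult_ac)
    also have "\<dots> = (cl_sign A (sd A D) * K (sd A D)) * pd j (\<lambda>y. G y A) x"
      using assms unfolding cl_diff_def by (intro pd_cmult) auto
    finally show "pd j (\<lambda>y. cl_sign A (sd A D) * G y A * K (sd A D)) x = cl_sign A (sd A D) * pd j (\<lambda>y. G y A) x * K (sd A D)"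
      by (simp add: mult_ac)
  qed
  finally show "pd_cl j (\<lambda>y. cl_mult (G y) K) x D = cl_mult (pd_cl j G x) K D"
    unfolding pd_cl_def cl_mult_alt by simp
qed

lemma cl_diff_smul:
  fixes G :: "real ^ 'n::finite \<Rightarrow> 'n cl"
  shows "a differentiable (at x) \<Longrightarrow> cl_diff G x \<Longrightarrow> cl_diff (\<lambda>y. cl_smul (a y) (G y)) x"
  unfolding cl_diff_def cl_smul_def by auto

lemma pd_cl_smul:
  fixes G :: "real ^ 'n::finite \<Rightarrow> 'n cl"
  assumes "a differentiable (at x)" "cl_diff G x"
  shows "pd_cl j (\<lambda>y. cl_smul (a y) (G y)) x = cl_smul (pd j a x) (G x) + cl_smul (a x) (pd_cl j G x)"
  using assms unfolding pd_cl_def cl_smul_def cl_diff_def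
  by (intro ext) (simp add: pd_mult algebra_simps)

lemma cl_diff_const: "cl_diff (\<lambda>y. K) x"
  unfolding cl_diff_def by simp

lemma pd_cl_const: "pd_cl j (\<lambda>y. K) x = 0"
  unfolding pd_cl_def by (rule ext) simp

lemma cl_diff_scalar: "a differentiable (at x) \<Longrightarrow> cl_diff (\<lambda>y. cl_scalar (a y)) x"
  unfolding cl_diff_def cl_scalar_def cl_blade_def by (intro allI, case_tac "A = {}") auto

lemma pd_cl_scalar:
  assumes "a differentiable (at x)"
  shows "pd_cl j (\<lambda>y. cl_scalar (a y)) x = cl_scalar (pd j a x)"
  unfolding pd_cl_def cl_scalar_def cl_blade_def by (rule ext) simp

lemma cl_diff_sum:
  fixes G :: "'i \<Rightarrow> real ^ 'n::finite \<Rightarrow> 'n cl"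
  shows "finite I \<Longrightarrow> (\<And>i. i \<in> I \<Longrightarrow> cl_diff (G i) x) \<Longrightarrow> cl_diff (\<lambda>y. \<Sum>i\<in>I. G i y) x"
  unfolding cl_diff_def fsum_apply by (auto intro!: differentiable_sum)

lemma pd_cl_sum:
  fixes G :: "'i \<Rightarrow> real ^ 'n::finite \<Rightarrow> 'n cl"
  assumes "finite I" "\<And>i. i \<in> I \<Longrightarrow> cl_diff (G i) x"
  shows "pd_cl j (\<lambda>y. \<Sum>i\<in>I. G i y) x = (\<Sum>i\<in>I. pd_cl j (G i) x)"
  using assms unfolding pd_cl_def cl_diff_def fsum_apply
  by (intro ext) (simp add: pd_sum fsum_apply)

lemma pd_cl_local:
  assumes "open \<Omega>" "x \<in> \<Omega>" "\<And>y. y \<in> \<Omega> \<Longrightarrow> G y = H y"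
  shows "pd_cl j G x = pd_cl j H x"
  unfolding pd_cl_def by (rule ext) (rule pd_local[OF assms(1,2)], simp add: assms(3))

lemma dirac_local:
  assumes "open \<Omega>" "x \<in> \<Omega>" "\<And>y. y \<in> \<Omega> \<Longrightarrow> G y = H y"
  shows "dirac G x = dirac H x"
  unfolding dirac_pd_cl using pd_cl_local[OF assms] by simp

lemma dirac_add:
  assumes "cl_diff G x" "cl_diff H x"
  shows "dirac (\<lambda>y. G y + H y) x = dirac G x + dirac H x"
  unfolding dirac_pd_cl pd_cl_add[OF assms] cl_mult_add_right by (simp add: sum.distrib)

lemma dirac_diff:
  assumes "cl_diff G x" "cl_diff H x"
  shows "dirac (\<lambda>y. G y - H y) x = dirac G x - dirac H x"
  unfolding dirac_pd_cl pd_cl_diff[OF assms] cl_mult_diff_right by (simp add: sum_subtractf)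

lemma dirac_multK:
  fixes G :: "real ^ 'n::{finite,linorder} \<Rightarrow> 'n cl"
  assumes "cl_diff G x"
  shows "dirac (\<lambda>y. cl_mult (G y) K) x = cl_mult (dirac G x) K"
  unfolding dirac_pd_cl pd_cl_multK[OF assms] cl_mult_sum_left cl_mult_assoc ..

lemma pd_cl_smulK:
  fixes K :: "'n::finite cl"
  assumes "a differentiable (at x)"
  shows "pd_cl j (\<lambda>y. cl_smul (a y) K) x = cl_smul (pd j a x) K"
  using pd_cl_smul[OF assms cl_diff_const, of j K] by (simp add: pd_cl_const)



lemma cl_C1_scalar: "C1_on \<Omega> a \<Longrightarrow> cl_C1_on \<Omega> (\<lambda>y. cl_scalar (a y))"
  unfolding cl_C1_on_def cl_scalar_def cl_blade_def
proof
  fix A assume "C1_on \<Omega> a"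
  then show "C1_on \<Omega> (\<lambda>x. (\<lambda>A. if A = {} then a x else 0) A)"
    by (cases "A = {}") (simp_all add: C1_const)
qed

lemma cl_C1_add: "cl_C1_on \<Omega> G \<Longrightarrow> cl_C1_on \<Omega> H \<Longrightarrow> cl_C1_on \<Omega> (\<lambda>y. G y + H y)"
  unfolding cl_C1_on_def by (simp add: C1_add)
lemma cl_C1_sub: "cl_C1_on \<Omega> G \<Longrightarrow> cl_C1_on \<Omega> H \<Longrightarrow> cl_C1_on \<Omega> (\<lambda>y. G y - H y)"
  unfolding cl_C1_on_def by (simp add: C1_diff)
lemma cl_C1_smul: "C1_on \<Omega> a \<Longrightarrow> cl_C1_on \<Omega> G \<Longrightarrow> cl_C1_on \<Omega> (\<lambda>y. cl_smul (a y) (G y))"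
  unfolding cl_C1_on_def cl_smul_def by (simp add: C1_mult)
lemma cl_C1_const: "cl_C1_on \<Omega> (\<lambda>y. K)"
  unfolding cl_C1_on_def by (simp add: C1_const)
lemma cl_C1_smulc: "cl_C1_on \<Omega> G \<Longrightarrow> cl_C1_on \<Omega> (\<lambda>y. cl_smul c (G y))"
  using cl_C1_smul[OF C1_const] by blast
lemma cl_C1_sum: "finite I \<Longrightarrow> (\<And>i. i \<in> I \<Longrightarrow> cl_C1_on \<Omega> (G i)) \<Longrightarrow> cl_C1_on \<Omega> (\<lambda>y. \<Sum>i\<in>I. G i y)"
  unfolding cl_C1_on_def fsum_apply by (simp add: C1_sum)
lemma cl_C1_multK:
  fixes G :: "real ^ 'n::{finite,linorder} \<Rightarrow> 'n cl"
  shows "cl_C1_on \<Omega> G \<Longrightarrow> cl_C1_on \<Omega> (\<lambda>y. cl_mult (G y) K)"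
  unfolding cl_C1_on_def cl_mult_alt
  by (auto intro!: C1_sum C1_mult C1_const)

lemma dirac_smulc:
  assumes "cl_diff G x"
  shows "dirac (\<lambda>y. cl_smul c (G y)) x = cl_smul c (dirac G x)"
proof -
  have "pd_cl j (\<lambda>y. cl_smul c (G y)) x = cl_smul c (pd_cl j G x)" for j
    using pd_cl_smul[of "\<lambda>y. c" x G j] assms by simp
  then show ?thesis unfolding dirac_pd_cl by (simp add: cl_mult_smul_right cl_smul_sum)
qed

lemma cl_diff_smulc: "cl_diff G x \<Longrightarrow> cl_diff (\<lambda>y. cl_smul c (G y)) x"
  using cl_diff_smul[of "\<lambda>y. c"] by simp

lemma sym_sum:
  fixes c :: "'n::{finite,linorder} \<Rightarrow> 'n \<Rightarrow> complex"
  assumes sym: "\<And>j k. c j k = c k j"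
  shows "(\<Sum>j\<in>UNIV. \<Sum>k\<in>UNIV. cl_smul (c j k) (cl_mult (cl_e j) (cl_e k))) = cl_scalar (- (\<Sum>j\<in>UNIV. c j j))"
proof -
  let ?S = "(\<Sum>j\<in>UNIV. \<Sum>k\<in>UNIV. cl_smul (c j k) (cl_mult (cl_e j) (cl_e k)))"
  let ?S2 = "(\<Sum>j\<in>UNIV. \<Sum>k\<in>UNIV. cl_smul (c j k) (cl_mult (cl_e k) (cl_e j)))"
  have e1: "?S = ?S2"
    by (subst sum.swap) (simp add: sym)
  have "?S + ?S = ?S + ?S2" by (rule arg_cong[where f="\<lambda>z. ?S + z"], rule e1)
  also have "\<dots> = (\<Sum>j\<in>UNIV. \<Sum>k\<in>UNIV. cl_smul (c j k) (cl_mult (cl_e j) (cl_e k) + cl_mult (cl_e k) (cl_e j)))"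
    by (simp only: sum.distrib[symmetric] cl_smul_add)
  also have "\<dots> = (\<Sum>j\<in>UNIV. \<Sum>k\<in>UNIV. cl_scalar (if j = k then -2 * c j k else 0))"
    by (simp add: cl_e_anticomm cl_smul_scalar) (intro sum.cong refl, simp add: mult.commute)
  also have "\<dots> = (\<Sum>j\<in>UNIV. cl_scalar (-2 * c j j))"
    by (simp add: cl_scalar_sum[symmetric] if_distrib sum.delta cong: if_cong)
  also have "\<dots> = cl_scalar (- (\<Sum>j\<in>UNIV. c j j)) + cl_scalar (- (\<Sum>j\<in>UNIV. c j j))"
    by (simp add: cl_scalar_sum[symmetric] cl_scalar_add[symmetric] sum_distrib_left[symmetric] sum_negf)
  finally have "?S + ?S = cl_scalar (- (\<Sum>j\<in>UNIV. c j j)) + cl_scalar (- (\<Sum>j\<in>UNIV. c j j))" .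
  then show ?thesis
  proof -
    assume h: "?S + ?S = cl_scalar (- (\<Sum>j\<in>UNIV. c j j)) + cl_scalar (- (\<Sum>j\<in>UNIV. c j j))"
    show ?thesis
    proof
      fix D
      from fun_cong[OF h, of D] show "?S D = cl_scalar (- (\<Sum>j\<in>UNIV. c j j)) D" by simp
    qed
  qed
qed

lemma cl_E_vec:
  assumes "even CARD('n::{finite,linorder})"
  shows "cl_mult cl_E (cl_vec v) = - cl_mult (cl_vec v) (cl_E :: 'n cl)"
  unfolding cl_vec_sum cl_mult_sum_left cl_mult_sum_right cl_mult_smul_left cl_mult_smul_right
  using cl_e_E[OF assms] by (simp add: cl_smul_minus sum_negf)



lemma blade_lamE: "cl_blade (lam * \<i>) UNIV = cl_smul lam cl_E"
  unfolding cl_E_def cl_smul_def cl_blade_def by (rule ext) simp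

lemma uniq_alg:
  fixes k dg :: "'n::{finite,linorder} cl"
  assumes ev: "even CARD('n)" and od: "odd (CARD('n) div 2)" and lam: "lam \<noteq> 0"
    and e1: "dg + cl_mult k (Fv - cl_smul lam cl_E) = 0"
    and e2: "- dg + cl_mult (- k) (Fv + cl_smul lam cl_E) = 0"
  shows "k = 0"
proof -
  have "cl_mult k (Fv - cl_smul lam cl_E) - cl_mult k (Fv + cl_smul lam cl_E) = 0"
    using arg_cong2[OF e1 e2, of "(+)"] by (simp add: cl_mult_minus_left algebra_simps)
  then have "cl_mult k (cl_smul (-2 * lam) cl_E) = 0"
  proof -
    assume h: "cl_mult k (Fv - cl_smul lam cl_E) - cl_mult k (Fv + cl_smul lam cl_E) = 0"
    have "(Fv - cl_smul lam cl_E) - (Fv + cl_smul lam cl_E) = cl_smul (-2 * lam) cl_E"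
      by (rule ext) (simp add: cl_smul_def)
    then show ?thesis using h unfolding cl_mult_diff_right[symmetric] by simp
  qed
  then have "cl_smul (-2 * lam) (cl_mult k cl_E) = 0" by (simp add: cl_mult_smul_right)
  then have kE: "cl_mult k cl_E = 0"
  proof -
    assume h: "cl_smul (-2 * lam) (cl_mult k cl_E) = 0"
    show ?thesis
    proof
      fix D from fun_cong[OF h, of D] lam show "cl_mult k cl_E D = 0 D" by (simp add: cl_smul_def)
    qed
  qed
  have "k = cl_mult (cl_mult k cl_E) cl_E"
    by (simp add: cl_mult_assoc cl_E_E[OF ev od] cl_scalar_mult_right)
  then show ?thesis using kE by simp
qed

theorem corollary7p2:
  fixes \<Omega> :: "(real, 'n::{finite,linorder}) vec set"
    and lam :: complex
    and f :: "(real, 'n) vec \<Rightarrow> (real, 'n) vec"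
    and \<phi> :: "(real, 'n) vec \<Rightarrow> complex"
  assumes "even CARD('n)" and "odd (CARD('n) div 2)"
    and "open \<Omega>"
    and "lam \<noteq> 0"
    and "\<forall>j. C1_on \<Omega> (\<lambda>x. complex_of_real (f x $ j))"
    and "C2_on \<Omega> \<phi>"
    and "\<forall>x\<in>\<Omega>. cl_scalar (- laplacian \<phi> x)
            + cl_mult (cl_scalar (\<phi> x))
                (dirac (\<lambda>y. cl_vec (f y)) x - cl_mult (cl_vec (f x)) (cl_vec (f x)))
          = cl_scalar (lam ^ 2 * \<phi> x)"
  shows "\<exists>g h. cl_C1_on \<Omega> g \<and> cl_C1_on \<Omega> h
           \<and> (\<forall>x\<in>\<Omega>. dirac g x + cl_mult (g x) (cl_vec (f x) - cl_blade (lam * \<i>) UNIV) = 0)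
           \<and> (\<forall>x\<in>\<Omega>. dirac h x + cl_mult (h x) (cl_vec (f x) + cl_blade (lam * \<i>) UNIV) = 0)
           \<and> (\<forall>x\<in>\<Omega>. g x + h x = cl_scalar (\<phi> x))
           \<and> (\<forall>g' h'. cl_C1_on \<Omega> g' \<and> cl_C1_on \<Omega> h'
                \<and> (\<forall>x\<in>\<Omega>. dirac g' x + cl_mult (g' x) (cl_vec (f x) - cl_blade (lam * \<i>) UNIV) = 0)
                \<and> (\<forall>x\<in>\<Omega>. dirac h' x + cl_mult (h' x) (cl_vec (f x) + cl_blade (lam * \<i>) UNIV) = 0)
                \<and> (\<forall>x\<in>\<Omega>. g' x + h' x = cl_scalar (\<phi> x))
                \<longrightarrow> (\<forall>x\<in>\<Omega>. g' x = g x \<and> h' x = h x))"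
proof -
  note ev = assms(1) and od = assms(2) and op = assms(3) and lam = assms(4)
  define Fv where "Fv y = cl_vec (f y)" for y
  define E where "E = (cl_E :: 'n cl)"
  define grad where "grad y = (\<Sum>k\<in>UNIV. cl_smul (pd k \<phi> y) (cl_e k))" for y
  define W where "W y = grad y + cl_smul (\<phi> y) (Fv y)" for y
  define g where "g y = cl_smul (1/2) (cl_scalar (\<phi> y) + cl_smul (1/lam) (cl_mult (W y) E))" for y
  define h where "h y = cl_smul (1/2) (cl_scalar (\<phi> y) - cl_smul (1/lam) (cl_mult (W y) E))" for y
  have bl: "cl_blade (lam * \<i>) UNIV = cl_smul lam E" unfolding E_def by (rule blade_lamE)
  have phiC1: "C1_on \<Omega> \<phi>" using assms(6) unfolding C2_on_def by blast
  have pdC1: "C1_on \<Omega> (pd k \<phi>)" for k using assms(6) unfolding C2_on_def by blast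
  have FC1: "cl_C1_on \<Omega> Fv"
    unfolding Fv_def cl_vec_sum
    by (intro cl_C1_sum cl_C1_smul cl_C1_const) (use assms(5) in auto)
  have gradC1: "cl_C1_on \<Omega> grad"
    unfolding grad_def by (intro cl_C1_sum cl_C1_smul cl_C1_const pdC1) auto
  have WC1: "cl_C1_on \<Omega> W"
    unfolding W_def by (intro cl_C1_add cl_C1_smul gradC1 FC1 phiC1)
  have gC1: "cl_C1_on \<Omega> g"
    unfolding g_def by (intro cl_C1_smulc cl_C1_add cl_C1_scalar phiC1 cl_C1_multK WC1)
  have hC1: "cl_C1_on \<Omega> h"
    unfolding h_def by (intro cl_C1_smulc cl_C1_sub cl_C1_scalar phiC1 cl_C1_multK WC1)
  have phid: "\<phi> differentiable (at y)" if "y \<in> \<Omega>" for y using C1_diffI[OF phiC1 that] .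
  have pdd: "pd k \<phi> differentiable (at y)" if "y \<in> \<Omega>" for y k using C1_diffI[OF pdC1 that] .
  have Fvd: "cl_diff Fv y" if "y \<in> \<Omega>" for y using cl_C1_diff[OF FC1 that] .
  have gradd: "cl_diff grad y" if "y \<in> \<Omega>" for y using cl_C1_diff[OF gradC1 that] .
  have Wd: "cl_diff W y" if "y \<in> \<Omega>" for y using cl_C1_diff[OF WC1 that] .
  have dscal: "dirac (\<lambda>y. cl_scalar (\<phi> y)) x = grad x" if x: "x \<in> \<Omega>" for x
    unfolding dirac_pd_cl pd_cl_scalar[OF phid[OF x]] cl_scalar_mult_right grad_def ..
  have dgrad: "dirac grad x = cl_scalar (- laplacian \<phi> x)" if x: "x \<in> \<Omega>" for x
  proof -
    have gfun: "grad = (\<lambda>y. \<Sum>k\<in>UNIV. cl_smul (pd k \<phi> y) (cl_e k))" by (rule ext) (simp add: grad_def)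
    have "pd_cl j grad x = (\<Sum>k\<in>UNIV. cl_smul (pd j (pd k \<phi>) x) (cl_e k))" for j
      unfolding gfun
      by (subst pd_cl_sum) (auto intro!: sum.cong cl_diff_smul cl_diff_const pdd[OF x] simp: pd_cl_smulK[OF pdd[OF x]])
    then have "dirac grad x = (\<Sum>j\<in>UNIV. \<Sum>k\<in>UNIV. cl_smul (pd j (pd k \<phi>) x) (cl_mult (cl_e j) (cl_e k)))"
      unfolding dirac_pd_cl by (simp add: cl_mult_sum_right cl_mult_smul_right)
    also have "\<dots> = cl_scalar (- (\<Sum>j\<in>UNIV. pd j (pd j \<phi>) x))"
      by (rule sym_sum) (rule schwarz[OF op x _ pdd[OF x] pdd[OF x]], use phid in blast)
    finally show ?thesis unfolding laplacian_def .
  qed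
  have dphiF: "dirac (\<lambda>y. cl_smul (\<phi> y) (Fv y)) x = cl_mult (grad x) (Fv x) + cl_smul (\<phi> x) (dirac Fv x)"
    if x: "x \<in> \<Omega>" for x
    unfolding dirac_pd_cl pd_cl_smul[OF phid[OF x] Fvd[OF x]] cl_mult_add_right cl_mult_smul_right
      sum.distrib grad_def cl_mult_sum_left cl_mult_smul_left cl_smul_sum ..
  have key: "dirac W x = cl_scalar (lam^2 * \<phi> x) + cl_mult (W x) (Fv x)" if x: "x \<in> \<Omega>" for x
  proof -
    have Wfun: "W = (\<lambda>y. grad y + cl_smul (\<phi> y) (Fv y))" by (rule ext) (simp add: W_def)
    have 1: "dirac W x = cl_scalar (- laplacian \<phi> x) + (cl_mult (grad x) (Fv x) + cl_smul (\<phi> x) (dirac Fv x))"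
      unfolding Wfun dirac_add[OF gradd[OF x] cl_diff_smul[OF phid[OF x] Fvd[OF x]]] dgrad[OF x] dphiF[OF x] ..
    have Ffun: "(\<lambda>y. cl_vec (f y)) = Fv" by (rule ext) (simp add: Fv_def)
    have 2: "cl_scalar (- laplacian \<phi> x) + cl_smul (\<phi> x) (dirac Fv x - cl_mult (Fv x) (Fv x)) = cl_scalar (lam ^ 2 * \<phi> x)"
      using assms(7)[rule_format, OF x] unfolding Ffun Fv_def[symmetric] cl_scalar_mult_left .
    have 3: "cl_mult (W x) (Fv x) = cl_mult (grad x) (Fv x) + cl_smul (\<phi> x) (cl_mult (Fv x) (Fv x))"
      unfolding W_def cl_mult_add_left cl_mult_smul_left ..
    show ?thesis unfolding 1 3
    proof
      fix D
      from fun_cong[OF 2, of D] show "(cl_scalar (- laplacian \<phi> x) + (cl_mult (grad x) (Fv x) + cl_smul (\<phi> x) (dirac Fv x))) D =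
          (cl_scalar (lam\<^sup>2 * \<phi> x) + (cl_mult (grad x) (Fv x) + cl_smul (\<phi> x) (cl_mult (Fv x) (Fv x)))) D"
        by (simp add: cl_smul_def algebra_simps)
    qed
  qed
  have WEd: "cl_diff (\<lambda>y. cl_smul (1/lam) (cl_mult (W y) E)) x" if x: "x \<in> \<Omega>" for x
    by (intro cl_diff_smulc cl_diff_multK Wd x)
  have dWE: "dirac (\<lambda>y. cl_smul (1/lam) (cl_mult (W y) E)) x = cl_smul (1/lam) (cl_mult (dirac W x) E)"
    if x: "x \<in> \<Omega>" for x
    unfolding dirac_smulc[OF cl_diff_multK[OF Wd[OF x]]] dirac_multK[OF Wd[OF x]] ..
  have dg: "dirac g x = cl_smul (1/2) (grad x + cl_smul (1/lam) (cl_mult (dirac W x) E))" if x: "x \<in> \<Omega>" for x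
  proof -
    have gfun: "g = (\<lambda>y. cl_smul (1/2) (cl_scalar (\<phi> y) + cl_smul (1/lam) (cl_mult (W y) E)))"
      by (rule ext) (simp add: g_def)
    show ?thesis unfolding gfun
      dirac_smulc[OF cl_diff_add[OF cl_diff_scalar[OF phid[OF x]] WEd[OF x]]]
      dirac_add[OF cl_diff_scalar[OF phid[OF x]] WEd[OF x]] dscal[OF x] dWE[OF x] ..
  qed
  have dh: "dirac h x = cl_smul (1/2) (grad x - cl_smul (1/lam) (cl_mult (dirac W x) E))" if x: "x \<in> \<Omega>" for x
  proof -
    have hfun: "h = (\<lambda>y. cl_smul (1/2) (cl_scalar (\<phi> y) - cl_smul (1/lam) (cl_mult (W y) E)))"
      by (rule ext) (simp add: h_def)
    show ?thesis unfolding hfun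
      dirac_smulc[OF cl_diff_diff[OF cl_diff_scalar[OF phid[OF x]] WEd[OF x]]]
      dirac_diff[OF cl_diff_scalar[OF phid[OF x]] WEd[OF x]] dscal[OF x] dWE[OF x] ..
  qed
  have EE: "cl_mult E E = cl_scalar 1" unfolding E_def by (rule cl_E_E[OF ev od])
  have WEF: "cl_mult (cl_mult (W x) E) (Fv x) = - cl_mult (cl_mult (W x) (Fv x)) E" for x
    unfolding cl_mult_assoc Fv_def E_def cl_E_vec[OF ev] cl_mult_minus_right ..
  have WEE: "cl_mult (cl_mult (W x) E) E = W x" for x
    unfolding cl_mult_assoc EE cl_scalar_mult_right by simp
  have eqg: "dirac g x + cl_mult (g x) (Fv x - cl_smul lam E) = 0" if x: "x \<in> \<Omega>" for x
  proof -
    have f1: "cl_mult (dirac W x) E = cl_smul (lam^2 * \<phi> x) E + cl_mult (cl_mult (W x) (Fv x)) E"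
      unfolding key[OF x] cl_mult_add_left cl_scalar_mult_left ..
    have f2: "cl_mult (g x) (Fv x - cl_smul lam E) = cl_smul (1/2) (cl_smul (\<phi> x) (Fv x - cl_smul lam E)
        + cl_smul (1/lam) (- cl_mult (cl_mult (W x) (Fv x)) E - cl_smul lam (W x)))"
      unfolding g_def cl_mult_smul_left cl_mult_add_left cl_scalar_mult_left cl_mult_diff_right
        cl_mult_smul_right WEF WEE
      using lam by (intro ext) (simp add: cl_smul_def field_simps)
    show ?thesis unfolding dg[OF x] f1 f2 W_def
    proof
      fix D
      show "(cl_smul (1 / 2) (grad x + cl_smul (1 / lam) (cl_smul (lam\<^sup>2 * \<phi> x) E + cl_mult (cl_mult (grad x + cl_smul (\<phi> x) (Fv x)) (Fv x)) E)) +
          cl_smul (1 / 2) (cl_smul (\<phi> x) (Fv x - cl_smul lam E) + cl_smul (1 / lam) (- cl_mult (cl_mult (grad x + cl_smul (\<phi> x) (Fv x)) (Fv x)) E -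
             cl_smul lam (grad x + cl_smul (\<phi> x) (Fv x))))) D = 0 D"
        using lam by (simp add: cl_smul_def field_simps power2_eq_square)
    qed
  qed
  have eqh: "dirac h x + cl_mult (h x) (Fv x + cl_smul lam E) = 0" if x: "x \<in> \<Omega>" for x
  proof -
    have f1: "cl_mult (dirac W x) E = cl_smul (lam^2 * \<phi> x) E + cl_mult (cl_mult (W x) (Fv x)) E"
      unfolding key[OF x] cl_mult_add_left cl_scalar_mult_left ..
    have f2: "cl_mult (h x) (Fv x + cl_smul lam E) = cl_smul (1/2) (cl_smul (\<phi> x) (Fv x + cl_smul lam E)
        - cl_smul (1/lam) (- cl_mult (cl_mult (W x) (Fv x)) E + cl_smul lam (W x)))"
      unfolding h_def cl_mult_smul_left cl_mult_diff_left cl_scalar_mult_left cl_mult_add_right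
        cl_mult_smul_right WEF WEE
      using lam by (intro ext) (simp add: cl_smul_def field_simps)
    show ?thesis unfolding dh[OF x] f1 f2 W_def
    proof
      fix D
      show "(cl_smul (1 / 2) (grad x - cl_smul (1 / lam) (cl_smul (lam\<^sup>2 * \<phi> x) E + cl_mult (cl_mult (grad x + cl_smul (\<phi> x) (Fv x)) (Fv x)) E)) +
          cl_smul (1 / 2) (cl_smul (\<phi> x) (Fv x + cl_smul lam E) - cl_smul (1 / lam) (- cl_mult (cl_mult (grad x + cl_smul (\<phi> x) (Fv x)) (Fv x)) E +
             cl_smul lam (grad x + cl_smul (\<phi> x) (Fv x))))) D = 0 D"
        using lam by (simp add: cl_smul_def field_simps power2_eq_square)
    qed
  qed
  have sumgh: "g x + h x = cl_scalar (\<phi> x)" for x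
    unfolding g_def h_def by (rule ext) (simp add: cl_smul_def field_simps)
  have uniq: "\<forall>x\<in>\<Omega>. g' x = g x \<and> h' x = h x"
    if g'C1: "cl_C1_on \<Omega> g'" and h'C1: "cl_C1_on \<Omega> h'"
      and eg': "\<forall>x\<in>\<Omega>. dirac g' x + cl_mult (g' x) (Fv x - cl_smul lam E) = 0"
      and eh': "\<forall>x\<in>\<Omega>. dirac h' x + cl_mult (h' x) (Fv x + cl_smul lam E) = 0"
      and s': "\<forall>x\<in>\<Omega>. g' x + h' x = cl_scalar (\<phi> x)" for g' h'
  proof
    fix x assume x: "x \<in> \<Omega>"
    have hh: "h' y - h y = g y - g' y" if "y \<in> \<Omega>" for y
    proof -
      have a: "h' y = cl_scalar (\<phi> y) - g' y" using s'[rule_format, OF that] by (simp add: eq_diff_eq add.commute)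
      have b: "h y = cl_scalar (\<phi> y) - g y" using sumgh[of y] by (simp add: eq_diff_eq add.commute)
      show ?thesis unfolding a b by (simp add: algebra_simps)
    qed
    have dd: "dirac h' x - dirac h x = - (dirac g' x - dirac g x)"
    proof -
      have "dirac h' x - dirac h x = dirac (\<lambda>y. h' y - h y) x"
        by (rule dirac_diff[symmetric]) (use h'C1 hC1 x cl_C1_diff in auto)
      also have "\<dots> = dirac (\<lambda>y. g y - g' y) x" by (rule dirac_local[OF op x hh])
      also have "\<dots> = dirac g x - dirac g' x"
        by (rule dirac_diff) (use g'C1 gC1 x cl_C1_diff in auto)
      finally show ?thesis by simp
    qed
    have hk: "h' x - h x = - (g' x - g x)" using hh[OF x] by simp
    have e1: "(dirac g' x - dirac g x) + cl_mult (g' x - g x) (Fv x - cl_smul lam E) = 0"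
      using arg_cong2[OF eg'[rule_format, OF x] eqg[OF x], of "(-)"] unfolding cl_mult_diff_left
      by (simp add: algebra_simps)
    have e2: "(dirac h' x - dirac h x) + cl_mult (h' x - h x) (Fv x + cl_smul lam E) = 0"
      using arg_cong2[OF eh'[rule_format, OF x] eqh[OF x], of "(-)"] unfolding cl_mult_diff_left
      by (simp add: algebra_simps)
    have "g' x - g x = 0"
      by (rule uniq_alg[OF ev od lam e1[unfolded E_def]]) (use e2 dd hk E_def in simp)
    then show "g' x = g x \<and> h' x = h x" using hk by simp
  qed
  show ?thesis
    apply (rule exI[of _ g], rule exI[of _ h])
    using gC1 hC1 eqg eqh sumgh uniq unfolding bl Fv_def by blast
qed


end
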